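(* Let $z=(x,\sigma)$ be a complete bounded solution of the hybrid system $\mathcal H=(C,f,D,g)$. For $j\in N$ let $t_{0,j}<t_{1,j}<t_{2,j}<\dots$ denote the successive (ordinary) time instants at which the value of $\sigma_j$ changes along the solution. Then there exists $\tau>0$ such that $t_{\ell+1,j}-t_{\ell,j}\ge\tau$ for all $\ell\ge1$ and all $j\in N$ (for which these instants exist).
   Context: Network model. $(N,E)$ is a connected directed graph with $N=\{1,\dots,|N|\}$, $E\subseteq N\times N$, with arbitrary orientation: if $(i,j)\in E$ then $(j,i)\notin E$. For $j\in N$, "$i:i\to j$" ranges over $i$ with $(i,j)\in E$ and "$k:j\to k$" over $k$ with $(j,k)\in E$. Constants: $M_j>0$, $p^L_j\in\mathbb{R}$ ($j\in N$), $B_{ij}>0$ ($(i,j)\in E$). Continuous state $x=(\eta,\omega,x^s)\in\mathbb{R}^n$ with $\eta_{ij}\in\mathbb{R}$ ($(i,j)\in E$), $\omega_j\in\mathbb{R}$, $x^s_j\in\mathbb{R}^{n_j}$ ($j\in N$), $n=|E|+|N|+\sum_jn_j$; $p_{ij}=B_{ij}\sin\eta_{ij}$, $s_j=g_j(x^s_j,-\omega_j)$, where $f_j:\mathbb{R}^{n_j}\times\mathbb{R}\to\mathbb{R}^{n_j}$, $g_j:\mathbb{R}^{n_j}\times\mathbb{R}\to\mathbb{R}$ are globally Lipschitz. Hysteretic loads as a hybrid system. For each $j$ constants $\overline d_j\ge0$ and thresholds $\omega^1_j>\omega^0_j>0$ are given. ${\rm sgn}(a)=1$ if $a\ge0$ and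 $-1$ otherwise. The discrete state is $\sigma\in P^{|N|}$, $P=\{-1,0,1\}$, and $z=(x,\sigma)$. Let $\mathcal I_j(\omega_j)=\{{\rm sgn}(\omega_j)\}$ if $|\omega_j|>\omega^1_j$, $\{0\}$ if $|\omega_j|<\omega^0_j$, $\{0,{\rm sgn}(\omega_j)\}$ if $\omega^0_j\le|\omega_j|\le\omega^1_j$; $\Lambda=C=\{z\in\mathbb{R}^n\times P^{|N|}:\sigma_j\in\mathcal I_j(\omega_j)\ \forall j\}$. Flow map $f$ on $C$: $\dot\eta_{ij}=\omega_i-\omega_j$; $M_j\dot\omega_j=-p^L_j+s_j-\overline d_j\sigma_j-\sum_{k:j\to k}p_{jk}+\sum_{i:i\to j}p_{ij}$; $\dot x^s_j=f_j(x^s_j,-\omega_j)$; $\dot\sigma_j=0$. Jump set $D$: the set of $z\in\Lambda$ such that for some $j$, either ($|\omega_j|=\omega^1_j$ and $\sigma_j=0$) or ($|\omega_j|=\omega^0_j$ and $\sigma_j={\rm sgn}(\omega_j)$). Jump map $g$ on $D$: $x^+=x$; $\sigma_j^+={\rm sgn}(\omega_j)$ if $|\omega_j|=\omega^1_j$ and $\sigma_j=0$, $\sigma_j^+=0$ if $|\omega_j|=\omega^0_j$ and $\sigma_j={\rm sgn}(\omega_j)$, $\sigma_j^+=\sigma_j$ otherwise. Hybrid solutions. A hybrid time domain is a subset $K\subseteq\mathbb{R}_{\ge0}\times\mathbb{N}_0$ that is a union of a finite or infinite sequence of sets $[t_\ell,t_{\ell+1}]\times\{\ell\}$ ($0=t_0\le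 t_1\le\dots$), the last one (if any) possibly of the form $[t_\ell,t_{\ell+1})\times\{\ell\}$ or $[t_\ell,\infty)\times\{\ell\}$. A solution of $\mathcal H$ is a map $z:K\to\mathbb{R}^n\times P^{|N|}$ on a hybrid time domain with $z(0,0)\in C\cup D$, such that for each $\ell$, $t\mapsto z(t,\ell)$ is locally absolutely continuous on $T_\ell=\{t:(t,\ell)\in K\}$, and if $T_\ell$ has nonempty interior then $z(t,\ell)\in C$ for all $t$ in the interior and $\dot z(t,\ell)=f(z(t,\ell))$ for almost all $t\in T_\ell$; and whenever $(t,\ell),(t,\ell+1)\in K$, $z(t,\ell)\in D$ and $z(t,\ell+1)=g(z(t,\ell))$. A solution is complete if $K$ is unbounded, and bounded if its range is bounded. *)

theory Defs
  imports "HOL-Analysis.Analysis"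
begin

text \<open>Continuous state x = (eta, omega, x^s) and discrete state sigma, bundled.
  Only the components eta e (e in E), om j (j in N), xs j k (j in N, k < n_j)
  and sg j (j in N) are meaningful; other entries are ignored everywhere.\<close>
record hstate =
  eta :: "nat \<times> nat \<Rightarrow> real"
  om  :: "nat \<Rightarrow> real"
  xs  :: "nat \<Rightarrow> nat \<Rightarrow> real"
  sg  :: "nat \<Rightarrow> int"

definition sgnh :: "real \<Rightarrow> int" where
  "sgnh a = (if a \<ge> 0 then 1 else -1)"

definition Iset :: "real \<Rightarrow> real \<Rightarrow> real \<Rightarrow> int set" where
  "Iset w0 w1 w = (if \<bar>w\<bar> > w1 then {sgnh w} else if \<bar>w\<bar> < w0 then {0} else {0, sgnh w})"

text \<open>Lambda = C\<close>
definition inLam :: "nat \<Rightarrow> (nat \<Rightarrow> real) \<Rightarrow> (nat \<Rightarrow> real) \<Rightarrow> hstate \<Rightarrow> bool" where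
  "inLam nN w0 w1 z \<longleftrightarrow> (\<forall>j\<in>{1..nN}. sg z j \<in> Iset (w0 j) (w1 j) (om z j))"

definition inD :: "nat \<Rightarrow> (nat \<Rightarrow> real) \<Rightarrow> (nat \<Rightarrow> real) \<Rightarrow> hstate \<Rightarrow> bool" where
  "inD nN w0 w1 z \<longleftrightarrow> inLam nN w0 w1 z \<and>
     (\<exists>j\<in>{1..nN}. (\<bar>om z j\<bar> = w1 j \<and> sg z j = 0) \<or> (\<bar>om z j\<bar> = w0 j \<and> sg z j = sgnh (om z j)))"

text \<open>z' = g(z) (on the meaningful components)\<close>
definition jump_ok :: "nat \<Rightarrow> (nat \<times> nat) set \<Rightarrow> (nat \<Rightarrow> nat) \<Rightarrow> (nat \<Rightarrow> real) \<Rightarrow> (nat \<Rightarrow> real)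
    \<Rightarrow> hstate \<Rightarrow> hstate \<Rightarrow> bool" where
  "jump_ok nN E ns w0 w1 z z' \<longleftrightarrow>
     (\<forall>e\<in>E. eta z' e = eta z e) \<and>
     (\<forall>j\<in>{1..nN}. om z' j = om z j \<and> (\<forall>k<ns j. xs z' j k = xs z j k) \<and>
        sg z' j = (if \<bar>om z j\<bar> = w1 j \<and> sg z j = 0 then sgnh (om z j)
                   else if \<bar>om z j\<bar> = w0 j \<and> sg z j = sgnh (om z j) then 0
                   else sg z j))"

definition restr :: "nat \<Rightarrow> (nat \<Rightarrow> real) \<Rightarrow> nat \<Rightarrow> real" where
  "restr n v = (\<lambda>k. if k < n then v k else 0)"

text \<open>right-hand side of M_j omega_j' = ..., divided by M_j\<close>
definition omega_rhs :: "(nat \<times> nat) set \<Rightarrow> (nat \<Rightarrow> real) \<Rightarrow> (nat \<Rightarrow> real) \<Rightarrow> (nat \<times> nat \<Rightarrow> real)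
    \<Rightarrow> (nat \<Rightarrow> nat) \<Rightarrow> (nat \<Rightarrow> (nat \<Rightarrow> real) \<Rightarrow> real \<Rightarrow> real) \<Rightarrow> (nat \<Rightarrow> real)
    \<Rightarrow> nat \<Rightarrow> hstate \<Rightarrow> real" where
  "omega_rhs E M pL B ns gs dbar j z =
     (- pL j + gs j (restr (ns j) (xs z j)) (- om z j) - dbar j * real_of_int (sg z j)
      - (\<Sum>k\<in>{k. (j, k) \<in> E}. B (j, k) * sin (eta z (j, k)))
      + (\<Sum>i\<in>{i. (i, j) \<in> E}. B (i, j) * sin (eta z (i, j)))) / M j"

text \<open>Each meaningful scalar coordinate of z, paired with its component of the flow map f\<close>
definition flow_coords :: "nat \<Rightarrow> (nat \<times> nat) set \<Rightarrow> (nat \<Rightarrow> real) \<Rightarrow> (nat \<Rightarrow> real)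
    \<Rightarrow> (nat \<times> nat \<Rightarrow> real) \<Rightarrow> (nat \<Rightarrow> nat)
    \<Rightarrow> (nat \<Rightarrow> (nat \<Rightarrow> real) \<Rightarrow> real \<Rightarrow> (nat \<Rightarrow> real))
    \<Rightarrow> (nat \<Rightarrow> (nat \<Rightarrow> real) \<Rightarrow> real \<Rightarrow> real) \<Rightarrow> (nat \<Rightarrow> real)
    \<Rightarrow> ((hstate \<Rightarrow> real) \<times> (hstate \<Rightarrow> real)) set" where
  "flow_coords nN E M pL B ns fs gs dbar =
     {((\<lambda>z. eta z (i, j)), (\<lambda>z. om z i - om z j)) | i j. (i, j) \<in> E}
   \<union> {((\<lambda>z. om z j), omega_rhs E M pL B ns gs dbar j) | j. j \<in> {1..nN}}
   \<union> {((\<lambda>z. xs z j k), (\<lambda>z. fs j (restr (ns j) (xs z j)) (- om z j) k)) | j k. j \<in> {1..nN} \<and> k < ns j}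
   \<union> {((\<lambda>z. real_of_int (sg z j)), (\<lambda>z. 0)) | j. j \<in> {1..nN}}"

definition abs_cont_on :: "real set \<Rightarrow> (real \<Rightarrow> real) \<Rightarrow> bool" where
  "abs_cont_on S f \<longleftrightarrow> (\<forall>\<epsilon>>0. \<exists>\<delta>>0. \<forall>(n::nat) a b.
      (\<forall>k<n. a k \<le> b k \<and> {a k..b k} \<subseteq> S) \<and> (\<forall>k. Suc k < n \<longrightarrow> b k \<le> a (Suc k)) \<and>
      (\<Sum>k<n. b k - a k) < \<delta> \<longrightarrow> (\<Sum>k<n. \<bar>f (b k) - f (a k)\<bar>) < \<epsilon>)"

definition loc_abs_cont_on :: "real set \<Rightarrow> (real \<Rightarrow> real) \<Rightarrow> bool" where
  "loc_abs_cont_on T f \<longleftrightarrow> (\<forall>a b. {a..b} \<subseteq> T \<longrightarrow> abs_cont_on {a..b} f)"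

definition hybrid_time_domain :: "(real \<times> nat) set \<Rightarrow> bool" where
  "hybrid_time_domain K \<longleftrightarrow> (\<exists>(tt :: nat \<Rightarrow> real) (L :: nat).
     tt 0 = 0 \<and> (\<forall>l. tt l \<le> tt (Suc l)) \<and>
     (K = (\<Union>l. {tt l..tt (Suc l)} \<times> {l})
      \<or> K = (\<Union>l<L. {tt l..tt (Suc l)} \<times> {l})
      \<or> K = (\<Union>l<L. {tt l..tt (Suc l)} \<times> {l}) \<union> ({tt L..<tt (Suc L)} \<times> {L})
      \<or> K = (\<Union>l<L. {tt l..tt (Suc l)} \<times> {l}) \<union> ({tt L..} \<times> {L})))"

definition is_solution :: "nat \<Rightarrow> (nat \<times> nat) set \<Rightarrow> (nat \<Rightarrow> real) \<Rightarrow> (nat \<Rightarrow> real)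
    \<Rightarrow> (nat \<times> nat \<Rightarrow> real) \<Rightarrow> (nat \<Rightarrow> nat)
    \<Rightarrow> (nat \<Rightarrow> (nat \<Rightarrow> real) \<Rightarrow> real \<Rightarrow> (nat \<Rightarrow> real))
    \<Rightarrow> (nat \<Rightarrow> (nat \<Rightarrow> real) \<Rightarrow> real \<Rightarrow> real) \<Rightarrow> (nat \<Rightarrow> real)
    \<Rightarrow> (nat \<Rightarrow> real) \<Rightarrow> (nat \<Rightarrow> real)
    \<Rightarrow> (real \<times> nat) set \<Rightarrow> (real \<times> nat \<Rightarrow> hstate) \<Rightarrow> bool" where
  "is_solution nN E M pL B ns fs gs dbar w0 w1 K z \<longleftrightarrow>
     hybrid_time_domain K \<and> (0, 0) \<in> K \<and>
     (inLam nN w0 w1 (z (0, 0)) \<or> inD nN w0 w1 (z (0, 0))) \<and>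
     (\<forall>l. (\<forall>(c, r) \<in> flow_coords nN E M pL B ns fs gs dbar.
             loc_abs_cont_on {t. (t, l) \<in> K} (\<lambda>t. c (z (t, l)))) \<and>
          (interior {t. (t, l) \<in> K} \<noteq> {} \<longrightarrow>
             (\<forall>t\<in>interior {t. (t, l) \<in> K}. inLam nN w0 w1 (z (t, l))) \<and>
             (\<forall>(c, r) \<in> flow_coords nN E M pL B ns fs gs dbar.
                AE t in lebesgue. t \<in> {t. (t, l) \<in> K} \<longrightarrow>
                  ((\<lambda>s. c (z (s, l))) has_real_derivative r (z (t, l))) (at t within {t. (t, l) \<in> K})))) \<and>
     (\<forall>t l. (t, l) \<in> K \<and> (t, Suc l) \<in> K \<longrightarrow>
        inD nN w0 w1 (z (t, l)) \<and> jump_ok nN E ns w0 w1 (z (t, l)) (z (t, Suc l)))"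

definition complete_dom :: "(real \<times> nat) set \<Rightarrow> bool" where
  "complete_dom K \<longleftrightarrow> (\<forall>R. \<exists>(t, l) \<in> K. R < t \<or> R < real l)"

definition bounded_sol :: "nat \<Rightarrow> (nat \<times> nat) set \<Rightarrow> (nat \<Rightarrow> nat) \<Rightarrow> (real \<times> nat) set
    \<Rightarrow> (real \<times> nat \<Rightarrow> hstate) \<Rightarrow> bool" where
  "bounded_sol nN E ns K z \<longleftrightarrow> (\<exists>R. \<forall>p\<in>K.
     (\<forall>e\<in>E. \<bar>eta (z p) e\<bar> \<le> R) \<and>
     (\<forall>j\<in>{1..nN}. \<bar>om (z p) j\<bar> \<le> R \<and> \<bar>sg (z p) j\<bar> \<le> R \<and> (\<forall>k<ns j. \<bar>xs (z p) j k\<bar> \<le> R)))"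

definition switch_times :: "(real \<times> nat) set \<Rightarrow> (real \<times> nat \<Rightarrow> hstate) \<Rightarrow> nat \<Rightarrow> real set" where
  "switch_times K z j = {t. \<exists>l. (t, l) \<in> K \<and> (t, Suc l) \<in> K \<and> sg (z (t, Suc l)) j \<noteq> sg (z (t, l)) j}"

text \<open>Euclidean distance in R^n x R, vectors of R^n given as nat => real (first n entries)\<close>
definition dist_nR :: "nat \<Rightarrow> (nat \<Rightarrow> real) \<Rightarrow> real \<Rightarrow> (nat \<Rightarrow> real) \<Rightarrow> real \<Rightarrow> real" where
  "dist_nR n v a w b = sqrt ((\<Sum>k<n. (v k - w k)\<^sup>2) + (a - b)\<^sup>2)"

definition norm_n :: "nat \<Rightarrow> (nat \<Rightarrow> real) \<Rightarrow> real" where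
  "norm_n n v = sqrt (\<Sum>k<n. (v k)\<^sup>2)"

end

theory Submission
  imports Defs
begin


lemma chain_le:
  fixes aa bb :: "nat \<Rightarrow> real"
  assumes ord: "\<forall>k. Suc k < n \<longrightarrow> bb k \<le> aa (Suc k)" and le: "\<forall>k<n. aa k \<le> bb k"
  shows "k < j \<Longrightarrow> j < n \<Longrightarrow> bb k \<le> aa j"
proof (induction j)
  case 0 then show ?case by simp
next
  case (Suc j)
  show ?case
  proof (cases "k = j")
    case True then show ?thesis using ord Suc by auto
  next
    case False
    then have "bb k \<le> aa j" using Suc by auto
    also have "aa j \<le> bb j" using le Suc by auto
    also have "bb j \<le> aa (Suc j)" using ord Suc by auto
    finally show ?thesis .
  qed
qed

lemma union_measure:
  fixes aa bb :: "nat \<Rightarrow> real"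
  assumes ord: "\<forall>k. Suc k < n \<longrightarrow> bb k \<le> aa (Suc k)" and le: "\<forall>k<n. aa k \<le> bb k"
  shows "(\<Union>k<n. {aa k<..<bb k}) \<in> lmeasurable \<and> measure lebesgue (\<Union>k<n. {aa k<..<bb k}) = (\<Sum>k<n. bb k - aa k)"
  using assms
proof (induction n)
  case 0 then show ?case by simp
next
  case (Suc n)
  have IH: "(\<Union>k<n. {aa k<..<bb k}) \<in> lmeasurable \<and> measure lebesgue (\<Union>k<n. {aa k<..<bb k}) = (\<Sum>k<n. bb k - aa k)"
    using Suc by auto
  have disj: "(\<Union>k<n. {aa k<..<bb k}) \<inter> {aa n<..<bb n} = {}"
  proof -
    have "bb k \<le> aa n" if "k < n" for k using chain_le[OF Suc.prems] that by auto
    then show ?thesis by (force simp: disjoint_iff)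
  qed
  have eq: "(\<Union>k<Suc n. {aa k<..<bb k}) = (\<Union>k<n. {aa k<..<bb k}) \<union> {aa n<..<bb n}"
    by (auto simp: lessThan_Suc)
  have m: "{aa n<..<bb n} \<in> lmeasurable" by simp
  show ?case unfolding eq
    using IH m disj measure_Un3[OF conjunct1[OF IH] m] Suc.prems by (auto simp: lessThan_Suc)
qed

lemma sum_len_le:
  fixes aa bb :: "nat \<Rightarrow> real"
  assumes ord: "\<forall>k. Suc k < n \<longrightarrow> bb k \<le> aa (Suc k)" and le: "\<forall>k<n. aa k \<le> bb k"
    and sub: "\<forall>k<n. {aa k..bb k} \<subseteq> G" and G: "G \<in> lmeasurable"
  shows "(\<Sum>k<n. bb k - aa k) \<le> measure lebesgue G"
proof -
  have "(\<Union>k<n. {aa k<..<bb k}) \<subseteq> G" using sub by fastforce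
  then show ?thesis using union_measure[OF ord le] measure_mono_fmeasurable[OF _ _ G]
    by (metis fmeasurableD)
qed

lemma ac_step:
  assumes ac: "abs_cont_on S f" and e: "e > 0"
  obtains d where "d > 0" "\<And>u v. u \<le> v \<Longrightarrow> {u..v} \<subseteq> S \<Longrightarrow> v - u < d \<Longrightarrow> \<bar>f v - f u\<bar> < e"
proof -
  obtain d where d: "d > 0" and H: "\<forall>(n::nat) aa bb.
      (\<forall>k<n. aa k \<le> bb k \<and> {aa k..bb k} \<subseteq> S) \<and> (\<forall>k. Suc k < n \<longrightarrow> bb k \<le> aa (Suc k)) \<and>
      (\<Sum>k<n. bb k - aa k) < d \<longrightarrow> (\<Sum>k<n. \<bar>f (bb k) - f (aa k)\<bar>) < e"
    using ac e unfolding abs_cont_on_def by blast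
  show ?thesis
  proof (rule that[OF d])
    fix u v assume "u \<le> v" "{u..v} \<subseteq> S" "v - u < d"
    then show "\<bar>f v - f u\<bar> < e"
      using H[rule_format, of 1 "\<lambda>_. u" "\<lambda>_. v"] by auto
  qed
qed

lemma ac_lip_upper:
  fixes f :: "real \<Rightarrow> real"
  assumes ab: "a \<le> b" and ac: "abs_cont_on {a..b} f" and N: "N \<in> null_sets lebesgue"
    and der: "\<forall>x\<in>{a..b} - N. \<exists>D. \<bar>D\<bar> \<le> C \<and> (f has_real_derivative D) (at x within {a..b})"
    and C: "C \<ge> 0"
  shows "f b - f a \<le> C * (b - a)"
proof -
  have key: "f b - f a - C*(b-a) \<le> \<epsilon> + \<eta>*(b-a)" if "\<epsilon> > 0" "\<eta> > 0" for \<epsilon> \<eta>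
  proof -
    obtain \<delta> where \<delta>: "\<delta> > 0" and acd: "\<forall>(n::nat) aa bb.
      (\<forall>k<n. aa k \<le> bb k \<and> {aa k..bb k} \<subseteq> {a..b}) \<and> (\<forall>k. Suc k < n \<longrightarrow> bb k \<le> aa (Suc k)) \<and>
      (\<Sum>k<n. bb k - aa k) < \<delta> \<longrightarrow> (\<Sum>k<n. \<bar>f (bb k) - f (aa k)\<bar>) < \<epsilon>"
      using ac \<open>\<epsilon> > 0\<close> unfolding abs_cont_on_def by blast
    have Nsets: "N \<in> sets lebesgue" using N by auto
    obtain G where G: "open G" "N \<subseteq> G" "G - N \<in> lmeasurable" "emeasure lebesgue (G - N) < ennreal \<delta>"
      using sets_lebesgue_outer_open[OF Nsets \<delta>] by blast
    have GU: "G = (G - N) \<union> N" using G by auto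
    have Nf: "N \<in> lmeasurable" using N by (simp add: fmeasurableI_null_sets)
    have Gm: "G \<in> lmeasurable" using GU G(3) Nf by (metis fmeasurable.Un)
    have "measure lebesgue G = measure lebesgue ((G - N) \<union> N)" using GU by (rule arg_cong)
    also have "\<dots> = measure lebesgue (G - N)"
      by (rule measure_Un_null_set) (use G(3) N in \<open>auto dest: fmeasurableD\<close>)
    finally have "measure lebesgue G = measure lebesgue (G - N)" .
    moreover have "measure lebesgue (G - N) < \<delta>"
      using G(3,4) \<delta> by (simp add: emeasure_eq_measure2 ennreal_less_iff)
    ultimately have Gmeas: "measure lebesgue G < \<delta>" by simp
    define fam where "fam s n aa bb \<longleftrightarrow> (\<forall>k<n. aa k \<le> bb k \<and> {aa k..bb k} \<subseteq> {a..s} \<inter> G) \<and>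
        (\<forall>k. Suc k < n \<longrightarrow> bb k \<le> aa (Suc k))" for s and n :: nat and aa bb :: "nat \<Rightarrow> real"
    define V where "V s = {\<Sum>k<n. \<bar>f (bb k) - f (aa k)\<bar> | n aa bb. fam s n aa bb}" for s
    define W where "W s = Sup (V s)" for s
    have Vbd: "v < \<epsilon>" if vs: "v \<in> V s" "s \<le> b" for v s
    proof -
      obtain n aa bb where fm: "fam s n aa bb" and v: "v = (\<Sum>k<n. \<bar>f (bb k) - f (aa k)\<bar>)"
        using vs unfolding V_def by blast
      have "(\<Sum>k<n. bb k - aa k) \<le> measure lebesgue G"
        using fm sum_len_le[of n bb aa G] Gm unfolding fam_def by blast
      then have "(\<Sum>k<n. bb k - aa k) < \<delta>" using Gmeas by linarith
      moreover have "\<forall>k<n. aa k \<le> bb k \<and> {aa k..bb k} \<subseteq> {a..b}"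
      proof (intro allI impI)
        fix k assume "k < n"
        then have "aa k \<le> bb k" "{aa k..bb k} \<subseteq> {a..s}" using fm unfolding fam_def by auto
        moreover have "{a..s} \<subseteq> {a..b}" using vs(2) by auto
        ultimately show "aa k \<le> bb k \<and> {aa k..bb k} \<subseteq> {a..b}" by blast
      qed
      ultimately show ?thesis using acd[rule_format, of n aa bb] fm v unfolding fam_def by blast
    qed
    have V0: "0 \<in> V s" for s
      unfolding V_def fam_def by (rule CollectI, rule exI[of _ 0]) auto
    have Vne: "V s \<noteq> {}" for s using V0 by blast
    have Vbdd: "bdd_above (V s)" if "s \<le> b" for s
      using Vbd that by (meson bdd_above.I less_imp_le)
    have Wub: "v \<le> W s" if "v \<in> V s" "s \<le> b" for v s
      unfolding W_def using that Vbdd by (simp add: cSup_upper)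
    have Wle: "W s \<le> \<epsilon>" if "s \<le> b" for s
      unfolding W_def using Vne Vbd that by (meson cSup_least less_imp_le)
    have Wnn: "0 \<le> W s" if "s \<le> b" for s using Wub V0 that by blast
    have Wext: "W s + \<bar>f u - f s\<bar> \<le> W u" if "a \<le> s" "s \<le> u" "u \<le> b" "{s..u} \<subseteq> G" for s u
    proof -
      have "v \<le> W u - \<bar>f u - f s\<bar>" if vs: "v \<in> V s" for v
      proof -
        obtain n aa bb where fm: "fam s n aa bb" and v: "v = (\<Sum>k<n. \<bar>f (bb k) - f (aa k)\<bar>)"
          using vs unfolding V_def by blast
        define aa' where "aa' = aa(n := s)"
        define bb' where "bb' = bb(n := u)"
        have P1: "\<forall>k<Suc n. aa' k \<le> bb' k \<and> {aa' k..bb' k} \<subseteq> {a..u} \<inter> G"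
        proof (intro allI impI)
          fix k assume k: "k < Suc n"
          show "aa' k \<le> bb' k \<and> {aa' k..bb' k} \<subseteq> {a..u} \<inter> G"
          proof (cases "k = n")
            case True
            have "{s..u} \<subseteq> {a..u}" using \<open>a \<le> s\<close> by auto
            then show ?thesis using True \<open>s \<le> u\<close> \<open>{s..u} \<subseteq> G\<close> by (simp add: aa'_def bb'_def)
          next
            case False
            then have "k < n" using k by simp
            then have "aa k \<le> bb k" "{aa k..bb k} \<subseteq> {a..s} \<inter> G" using fm unfolding fam_def by auto
            moreover have "{a..s} \<inter> G \<subseteq> {a..u} \<inter> G" using \<open>s \<le> u\<close> by auto
            ultimately have "aa k \<le> bb k \<and> {aa k..bb k} \<subseteq> {a..u} \<inter> G" by blast
            moreover have "aa' k = aa k" "bb' k = bb k" using False by (auto simp: aa'_def bb'_def)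
            ultimately show ?thesis by (simp only:)
          qed
        qed
        have P2: "\<forall>k. Suc k < Suc n \<longrightarrow> bb' k \<le> aa' (Suc k)"
        proof (intro allI impI)
          fix k assume k: "Suc k < Suc n"
          show "bb' k \<le> aa' (Suc k)"
          proof (cases "Suc k = n")
            case True
            then have "{aa k..bb k} \<subseteq> {a..s}" "aa k \<le> bb k" using fm unfolding fam_def by auto
            then show ?thesis using True unfolding aa'_def bb'_def by auto
          next
            case False
            then show ?thesis using fm k unfolding fam_def aa'_def bb'_def by auto
          qed
        qed
        have "fam u (Suc n) aa' bb'" unfolding fam_def using P1 P2 by blast
        moreover have "(\<Sum>k<Suc n. \<bar>f (bb' k) - f (aa' k)\<bar>) = v + \<bar>f u - f s\<bar>"
          unfolding v aa'_def bb'_def by simp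
        ultimately have "v + \<bar>f u - f s\<bar> \<in> V u" unfolding V_def
          by (intro CollectI exI[of _ "Suc n"] exI[of _ aa'] exI[of _ bb']) simp
        from Wub[OF this \<open>u \<le> b\<close>] show ?thesis by simp
      qed
      then have "W s \<le> W u - \<bar>f u - f s\<bar>" unfolding W_def[of s] using Vne by (meson cSup_least)
      then show ?thesis by simp
    qed
    have Wmono: "W s \<le> W s'" if "s \<le> s'" "s' \<le> b" for s s'
    proof -
      have famm: "fam s' n aa bb" if "fam s n aa bb" for n aa bb
      proof -
        have "{a..s} \<inter> G \<subseteq> {a..s'} \<inter> G" using \<open>s \<le> s'\<close> by auto
        then show ?thesis using that unfolding fam_def by blast
      qed
      have "V s \<subseteq> V s'" unfolding V_def using famm by blast
      then show ?thesis unfolding W_def using Vne Vbdd that by (meson cSup_subset_mono)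
    qed
    define Q where "Q s \<longleftrightarrow> f s - f a - C*(s-a) \<le> W s + \<eta>*(s-a)" for s
    define A where "A = {s\<in>{a..b}. \<forall>u\<in>{a..s}. Q u}"
    have Qa: "Q a" unfolding Q_def using Wnn[of a] ab by simp
    have "\<forall>u\<in>{a..a}. Q u" using Qa by simp
    then have aA: "a \<in> A" unfolding A_def using ab by simp
    have Abdd: "bdd_above A" by (rule bdd_aboveI[of _ b]) (simp add: A_def)
    define s0 where "s0 = Sup A"
    have as0: "a \<le> s0" unfolding s0_def using aA Abdd by (simp add: cSup_upper)
    have s0b: "s0 \<le> b" unfolding s0_def by (rule cSup_least) (use aA in \<open>auto simp: A_def\<close>)
    have Qbelow: "Q u" if us: "a \<le> u" "u < s0" for u
    proof -
      obtain s where "s \<in> A" "u < s" using less_cSup_iff[of A u] aA Abdd us(2) unfolding s0_def by blast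
      then show ?thesis unfolding A_def using us by auto
    qed
    have Qs0: "Q s0"
    proof (cases "s0 = a")
      case True then show ?thesis using Qa by simp
    next
      case False
      then have lt: "a < s0" using as0 by simp
      have "f s0 - f a - C*(s0-a) \<le> (W s0 + \<eta>*(s0-a)) + e" if e: "e > 0" for e
      proof -
        obtain d where d: "d > 0" and dH: "\<And>u v. u \<le> v \<Longrightarrow> {u..v} \<subseteq> {a..b} \<Longrightarrow> v - u < d \<Longrightarrow> \<bar>f v - f u\<bar> < e"
          using ac_step[OF ac e] by blast
        define u where "u = max a (s0 - d/2)"
        have u: "a \<le> u" "u < s0" "s0 - u < d" using lt d unfolding u_def by auto
        have "\<bar>f s0 - f u\<bar> < e" using dH[of u s0] u s0b by auto
        moreover have "Q u" using Qbelow u by auto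
        moreover have "W u \<le> W s0" using Wmono u s0b by auto
        moreover have "C*(u-a) \<le> C*(s0-a)" using C u by (intro mult_left_mono) auto
        moreover have "\<eta>*(u-a) \<le> \<eta>*(s0-a)" using \<open>\<eta> > 0\<close> u by (intro mult_left_mono) auto
        ultimately show ?thesis unfolding Q_def by linarith
      qed
      then show ?thesis unfolding Q_def by (rule field_le_epsilon)
    qed
    have s0eq: "s0 = b"
    proof (rule ccontr)
      assume "s0 \<noteq> b"
      then have s0lt: "s0 < b" using s0b by simp
      have "\<exists>h>0. s0 + h \<le> b \<and> (\<forall>u\<in>{s0..s0+h}. Q u)"
      proof (cases "s0 \<in> N")
        case True
        then have "s0 \<in> G" using G by auto
        then obtain e where e: "e > 0" "ball s0 e \<subseteq> G" using G(1) open_contains_ball by blast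
        define h where "h = min (e/2) (b - s0)"
        have h: "h > 0" "s0 + h \<le> b" "h < e" using e s0lt unfolding h_def by auto
        have "Q u" if u: "u \<in> {s0..s0+h}" for u
        proof -
          have "{s0..u} \<subseteq> G"
          proof
            fix x assume "x \<in> {s0..u}"
            then have "x \<in> ball s0 e" using u h by (auto simp: dist_real_def)
            then show "x \<in> G" using e by auto
          qed
          then have "W s0 + \<bar>f u - f s0\<bar> \<le> W u" using Wext[of s0 u] as0 u h by auto
          moreover have "C*(s0-a) \<le> C*(u-a)" using C u by (intro mult_left_mono) auto
          moreover have "\<eta>*(s0-a) \<le> \<eta>*(u-a)" using \<open>\<eta> > 0\<close> u by (intro mult_left_mono) auto
          moreover have "f u - f s0 \<le> \<bar>f u - f s0\<bar>" by simp
          ultimately show ?thesis using Qs0 unfolding Q_def by linarith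
        qed
        then show ?thesis using h by blast
      next
        case False
        then have "s0 \<in> {a..b} - N" using as0 s0b by auto
        then obtain D where D: "\<bar>D\<bar> \<le> C" "(f has_real_derivative D) (at s0 within {a..b})"
          using der by blast
        then have "((\<lambda>y. (f y - f s0) / (y - s0)) \<longlongrightarrow> D) (at s0 within {a..b})"
          using has_field_derivative_iff by blast
        then have "eventually (\<lambda>y. dist ((f y - f s0) / (y - s0)) D < \<eta>) (at s0 within {a..b})"
          using \<open>\<eta> > 0\<close> tendstoD by blast
        then obtain e where e: "e > 0" and eH: "\<forall>y\<in>{a..b}. y \<noteq> s0 \<and> dist y s0 < e \<longrightarrow> dist ((f y - f s0) / (y - s0)) D < \<eta>"
          unfolding eventually_at by blast
        define h where "h = min (e/2) (b - s0)"
        have h: "h > 0" "s0 + h \<le> b" "h < e" using e s0lt unfolding h_def by auto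
        have "Q u" if u: "u \<in> {s0..s0+h}" for u
        proof (cases "u = s0")
          case True then show ?thesis using Qs0 by simp
        next
          case False
          then have us: "s0 < u" using u by auto
          have "dist ((f u - f s0) / (u - s0)) D < \<eta>"
            using eH[rule_format, of u] u h as0 False by (auto simp: dist_real_def)
          then have "(f u - f s0) / (u - s0) \<le> D + \<eta>" by (auto simp: dist_real_def)
          then have "f u - f s0 \<le> (D + \<eta>) * (u - s0)" using us by (simp add: divide_le_eq)
          also have "\<dots> \<le> (C + \<eta>) * (u - s0)" using D(1) us by (intro mult_right_mono) auto
          finally have fu: "f u - f s0 \<le> (C + \<eta>) * (u - s0)" .
          have "W s0 \<le> W u" using Wmono us u h by auto
          then show ?thesis using Qs0 fu unfolding Q_def by (simp add: algebra_simps)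
        qed
        then show ?thesis using h by blast
      qed
      then obtain h where h: "h > 0" "s0 + h \<le> b" "\<forall>u\<in>{s0..s0+h}. Q u" by blast
      have "s0 + h \<in> A" unfolding A_def
      proof (intro CollectI conjI ballI)
        show "s0 + h \<in> {a..b}" using h as0 by auto
      next
        fix u assume "u \<in> {a..s0+h}"
        then show "Q u" using Qbelow h by (cases "u < s0") auto
      qed
      then have "s0 + h \<le> s0" unfolding s0_def using Abdd by (rule cSup_upper)
      then show False using h by simp
    qed
    have "Q b" using Qs0 s0eq by simp
    then show ?thesis unfolding Q_def using Wle[of b] by simp
  qed
  show ?thesis
  proof -
    have "f b - f a - C*(b-a) \<le> 0 + e" if "e > 0" for e
    proof -
      have "f b - f a - C*(b-a) \<le> e/2 + (e/(2*(b-a+1)))*(b-a)"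
        using key[of "e/2" "e/(2*(b-a+1))"] that ab by simp
      also have "(e/(2*(b-a+1)))*(b-a) \<le> e/2"
        using that ab by (simp add: field_simps)
      finally show ?thesis by simp
    qed
    then have "f b - f a - C*(b-a) \<le> 0" by (rule field_le_epsilon)
    then show ?thesis by simp
  qed
qed

lemma ac_lip:
  fixes f :: "real \<Rightarrow> real"
  assumes ab: "a \<le> b" and ac: "abs_cont_on {a..b} f" and N: "N \<in> null_sets lebesgue"
    and der: "\<forall>x\<in>{a..b} - N. \<exists>D. \<bar>D\<bar> \<le> C \<and> (f has_real_derivative D) (at x within {a..b})"
    and C: "C \<ge> 0"
  shows "\<bar>f b - f a\<bar> \<le> C * (b - a)"
proof -
  have 1: "f b - f a \<le> C * (b - a)" by (rule ac_lip_upper[OF ab ac N der C])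
  have ac2: "abs_cont_on {a..b} (\<lambda>x. - f x)"
    using ac unfolding abs_cont_on_def by (simp add: abs_minus_commute)
  have der2: "\<forall>x\<in>{a..b} - N. \<exists>D. \<bar>D\<bar> \<le> C \<and> ((\<lambda>x. - f x) has_real_derivative D) (at x within {a..b})"
  proof
    fix x assume "x \<in> {a..b} - N"
    then obtain D where "\<bar>D\<bar> \<le> C" "(f has_real_derivative D) (at x within {a..b})" using der by blast
    then show "\<exists>D. \<bar>D\<bar> \<le> C \<and> ((\<lambda>x. - f x) has_real_derivative D) (at x within {a..b})"
      by (intro exI[of _ "-D"]) (auto intro: derivative_intros)
  qed
  have 2: "(- f b) - (- f a) \<le> C * (b - a)" by (rule ac_lip_upper[OF ab ac2 N der2 C])
  show ?thesis using 1 2 by linarith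
qed

lemma ac_cont:
  fixes f :: "real \<Rightarrow> real"
  assumes ac: "abs_cont_on {a..b} f"
  shows "continuous_on {a..b} f"
  unfolding continuous_on_iff
proof (intro ballI allI impI)
  fix x e :: real assume x: "x \<in> {a..b}" and e: "e > 0"
  obtain d where d: "d > 0" and dH: "\<And>u v. u \<le> v \<Longrightarrow> {u..v} \<subseteq> {a..b} \<Longrightarrow> v - u < d \<Longrightarrow> \<bar>f v - f u\<bar> < e"
    using ac_step[OF ac e] by blast
  show "\<exists>d>0. \<forall>x'\<in>{a..b}. dist x' x < d \<longrightarrow> dist (f x') (f x) < e"
  proof (intro exI[of _ d] conjI ballI impI)
    show "d > 0" by (rule d)
    fix x' assume x': "x' \<in> {a..b}" and dd: "dist x' x < d"
    show "dist (f x') (f x) < e"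
    proof (cases "x \<le> x'")
      case True
      have "{x..x'} \<subseteq> {a..b}" using x x' by auto
      then show ?thesis using dH[of x x'] True dd by (simp add: dist_real_def)
    next
      case False
      have "{x'..x} \<subseteq> {a..b}" using x x' by auto
      then show ?thesis using dH[of x' x] False dd by (simp add: dist_real_def abs_minus_commute)
    qed
  qed
qed

lemma int_cont_const:
  fixes \<sigma> :: "real \<Rightarrow> int"
  assumes ab: "a \<le> b" and c: "continuous_on {a..b} (\<lambda>t. real_of_int (\<sigma> t))"
  shows "\<sigma> a = \<sigma> b"
proof (rule ccontr)
  assume ne: "\<sigma> a \<noteq> \<sigma> b"
  have noh: False if "real_of_int (\<sigma> x) = real_of_int k + 1/2" for x k
  proof -
    have "real_of_int (2 * (\<sigma> x - k)) = 1" using that by simp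
    then have "2 * (\<sigma> x - k) = 1" by (simp only: of_int_eq_1_iff)
    then show False by presburger
  qed
  show False
  proof (cases "\<sigma> a < \<sigma> b")
    case True
    have "real_of_int (\<sigma> a) \<le> real_of_int (\<sigma> a) + 1/2" "real_of_int (\<sigma> a) + 1/2 \<le> real_of_int (\<sigma> b)"
      using True by linarith+
    then obtain x where "real_of_int (\<sigma> x) = real_of_int (\<sigma> a) + 1/2"
      using IVT'[of "\<lambda>t. real_of_int (\<sigma> t)" a _ b] ab c by blast
    then show False using noh by blast
  next
    case False
    then have lt: "\<sigma> b < \<sigma> a" using ne by simp
    have "real_of_int (\<sigma> b) \<le> real_of_int (\<sigma> b) + 1/2" "real_of_int (\<sigma> b) + 1/2 \<le> real_of_int (\<sigma> a)"
      using lt by linarith+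
    then obtain x where "real_of_int (\<sigma> x) = real_of_int (\<sigma> b) + 1/2"
      using IVT2'[of "\<lambda>t. real_of_int (\<sigma> t)" b _ a] ab c by blast
    then show False using noh by blast
  qed
qed

lemma htd_props:
  assumes "hybrid_time_domain K"
  shows "\<exists>tt::nat\<Rightarrow>real. (\<forall>l. tt l \<le> tt (Suc l)) \<and> (\<forall>t m. (t,m)\<in>K \<longrightarrow> tt m \<le> t) \<and>
    (\<forall>t m t' m'. (t,m)\<in>K \<longrightarrow> (t',m')\<in>K \<longrightarrow> m < m' \<longrightarrow> t \<le> tt (Suc m)) \<and>
    (\<forall>m t' m'. (t',m')\<in>K \<longrightarrow> m < m' \<longrightarrow> (tt (Suc m), m) \<in> K \<and> (tt (Suc m), Suc m) \<in> K) \<and>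
    (\<forall>m t1 t2 t. (t1,m)\<in>K \<longrightarrow> (t2,m)\<in>K \<longrightarrow> t1 \<le> t \<longrightarrow> t \<le> t2 \<longrightarrow> (t,m)\<in>K)"
proof -
  obtain tt :: "nat \<Rightarrow> real" and L :: nat where mono: "\<forall>l. tt l \<le> tt (Suc l)" and
    cs: "K = (\<Union>l. {tt l..tt (Suc l)} \<times> {l})
      \<or> K = (\<Union>l<L. {tt l..tt (Suc l)} \<times> {l})
      \<or> K = (\<Union>l<L. {tt l..tt (Suc l)} \<times> {l}) \<union> ({tt L..<tt (Suc L)} \<times> {L})
      \<or> K = (\<Union>l<L. {tt l..tt (Suc l)} \<times> {l}) \<union> ({tt L..} \<times> {L})"
    using assms unfolding hybrid_time_domain_def by blast
  have memb: "(\<forall>t m. (t,m)\<in>K \<longleftrightarrow> tt m \<le> t \<and> t \<le> tt (Suc m))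
      \<or> (\<forall>t m. (t,m)\<in>K \<longleftrightarrow> m < L \<and> tt m \<le> t \<and> t \<le> tt (Suc m))
      \<or> (\<forall>t m. (t,m)\<in>K \<longleftrightarrow> (m < L \<and> tt m \<le> t \<and> t \<le> tt (Suc m)) \<or> (m = L \<and> tt L \<le> t \<and> t < tt (Suc L)))
      \<or> (\<forall>t m. (t,m)\<in>K \<longleftrightarrow> (m < L \<and> tt m \<le> t \<and> t \<le> tt (Suc m)) \<or> (m = L \<and> tt L \<le> t))"
    using cs by (elim disjE) auto
  have ttm: "tt (Suc m) \<le> tt m'" if "m < m'" for m m'
    using lift_Suc_mono_le[of tt "Suc m" m'] mono that by auto
  show ?thesis
  proof (intro exI[of _ tt] conjI)
    show "\<forall>l. tt l \<le> tt (Suc l)" by (rule mono)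
    show "\<forall>t m. (t,m)\<in>K \<longrightarrow> tt m \<le> t" using memb by (elim disjE) auto
    show "\<forall>t m t' m'. (t,m)\<in>K \<longrightarrow> (t',m')\<in>K \<longrightarrow> m < m' \<longrightarrow> t \<le> tt (Suc m)"
      using memb by (elim disjE) auto
    show "\<forall>m t' m'. (t',m')\<in>K \<longrightarrow> m < m' \<longrightarrow> (tt (Suc m), m) \<in> K \<and> (tt (Suc m), Suc m) \<in> K"
      using memb mono by (elim disjE) (auto simp: Suc_le_eq dest: ttm; metis Suc_lessI order.strict_trans1 ttm le_less_trans less_SucI)+
    show "\<forall>m t1 t2 t. (t1,m)\<in>K \<longrightarrow> (t2,m)\<in>K \<longrightarrow> t1 \<le> t \<longrightarrow> t \<le> t2 \<longrightarrow> (t,m)\<in>K"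
      using memb by (elim disjE) auto
  qed
qed



lemma dom_lip:
  fixes K :: "(real \<times> nat) set" and w :: "real \<times> nat \<Rightarrow> real"
  assumes F2': "\<forall>s m s' m'. (s,m)\<in>K \<longrightarrow> (s',m')\<in>K \<longrightarrow> m<m' \<longrightarrow> s \<le> s'"
    and F3': "\<forall>s m s' m'. (s,m)\<in>K \<longrightarrow> (s',m')\<in>K \<longrightarrow> m<m' \<longrightarrow> (\<exists>r. (r,m)\<in>K \<and> (r,Suc m)\<in>K)"
    and jump': "\<forall>r m. (r,m)\<in>K \<longrightarrow> (r,Suc m)\<in>K \<longrightarrow> w (r,Suc m) = w (r,m)"
    and flow': "\<forall>s s' m. (s,m)\<in>K \<longrightarrow> (s',m)\<in>K \<longrightarrow> s \<le> s' \<longrightarrow> \<bar>w (s',m) - w (s,m)\<bar> \<le> C*(s'-s)"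
  shows "(s,m)\<in>K \<Longrightarrow> (s',m+k)\<in>K \<Longrightarrow> s \<le> s' \<Longrightarrow> \<bar>w (s',m+k) - w (s,m)\<bar> \<le> C*(s'-s)"
proof (induction k arbitrary: s m)
  note F2 = F2'[rule_format] and F3 = F3'[rule_format] and jump = jump'[rule_format] and flow = flow'[rule_format]
  case 0 then show ?case using flow by simp
next
  case (Suc k)
  note F2 = F2'[rule_format] and F3 = F3'[rule_format] and jump = jump'[rule_format] and flow = flow'[rule_format]
  obtain r where r: "(r,m)\<in>K" "(r,Suc m)\<in>K" using F3[OF Suc.prems(1) Suc.prems(2)] by auto
  have sr: "s \<le> r" using F2[OF Suc.prems(1) r(2)] by simp
  have rs: "r \<le> s'" using F2[OF r(1) Suc.prems(2)] by simp
  have e: "Suc m + k = m + Suc k" by simp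
  have 1: "\<bar>w (s', m + Suc k) - w (r, Suc m)\<bar> \<le> C*(s'-r)"
    using Suc.IH[of r "Suc m"] r(2) Suc.prems(2) rs unfolding e by simp
  have 2: "\<bar>w (r,m) - w (s,m)\<bar> \<le> C*(r-s)" using flow[OF Suc.prems(1) r(1) sr] .
  have 3: "w (r,Suc m) = w (r,m)" using jump r by blast
  have "\<bar>w (s', m + Suc k) - w (s,m)\<bar> \<le> C*(s'-r) + C*(r-s)" using 1 2 3 by linarith
  also have "\<dots> = C*(s'-s)" by (simp add: algebra_simps)
  finally show ?case .
qed

lemma dom_chain:
  fixes K :: "(real \<times> nat) set" and \<sigma> :: "real \<times> nat \<Rightarrow> int"
  assumes F3': "\<forall>s m s' m'. (s,m)\<in>K \<longrightarrow> (s',m')\<in>K \<longrightarrow> m<m' \<longrightarrow> (\<exists>r. (r,m)\<in>K \<and> (r,Suc m)\<in>K)"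
    and const': "\<forall>s s' m. (s,m)\<in>K \<longrightarrow> (s',m)\<in>K \<longrightarrow> \<sigma> (s,m) = \<sigma> (s',m)"
  shows "(s,m)\<in>K \<Longrightarrow> (s',m+k)\<in>K \<Longrightarrow> P (\<sigma> (s,m)) \<Longrightarrow> \<not> P (\<sigma> (s',m+k)) \<Longrightarrow>
     \<exists>r q. m \<le> q \<and> q < m+k \<and> (r,q)\<in>K \<and> (r,Suc q)\<in>K \<and> P (\<sigma> (r,q)) \<and> \<not> P (\<sigma> (r,Suc q))"
proof (induction k arbitrary: s m)
  note F3 = F3'[rule_format] and const = const'[rule_format]
  case 0
  have "(s',m)\<in>K" using 0 by simp
  from const[OF 0(1) this] have "\<sigma> (s,m) = \<sigma> (s',m)" .
  then show ?case using 0(3,4) by simp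
next
  note F3 = F3'[rule_format] and const = const'[rule_format]
  case (Suc k)
  obtain r where r: "(r,m)\<in>K" "(r,Suc m)\<in>K" using F3[OF Suc.prems(1) Suc.prems(2)] by auto
  have Pr: "P (\<sigma> (r,m))" using const[OF Suc.prems(1) r(1)] Suc.prems(3) by simp
  show ?case
  proof (cases "P (\<sigma> (r,Suc m))")
    case False
    then show ?thesis using r Pr by (intro exI[of _ r] exI[of _ m]) auto
  next
    case True
    have e: "Suc m + k = m + Suc k" by simp
    obtain r' q where "Suc m \<le> q" "q < Suc m + k" "(r',q)\<in>K" "(r',Suc q)\<in>K" "P (\<sigma> (r',q))" "\<not> P (\<sigma> (r',Suc q))"
      using Suc.IH[of r "Suc m"] r(2) True Suc.prems(2,4) unfolding e by blast
    then show ?thesis by (intro exI[of _ r'] exI[of _ q]) auto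
  qed
qed

lemma rhs_bound:
  fixes E :: "(nat \<times> nat) set" and R :: real
  assumes finE: "finite E" and Mj: "M j > 0"
    and lip: "\<exists>L. \<forall>v a w b. \<bar>gs j v a - gs j w b\<bar> \<le> L * dist_nR (ns j) v a w b"
  shows "\<exists>Cj. \<forall>z::hstate. (\<bar>om z j\<bar> \<le> R \<and> \<bar>sg z j\<bar> \<le> R \<and> (\<forall>k<ns j. \<bar>xs z j k\<bar> \<le> R)) \<longrightarrow>
             \<bar>omega_rhs E M pL B ns gs dbar j z\<bar> \<le> Cj"
proof -
  obtain L where L: "\<forall>v a w b. \<bar>gs j v a - gs j w b\<bar> \<le> L * dist_nR (ns j) v a w b" using lip by blast
  define S1 where "S1 = (\<Sum>k\<in>{k. (j, k) \<in> E}. \<bar>B (j, k)\<bar>)"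
  define S2 where "S2 = (\<Sum>i\<in>{i. (i, j) \<in> E}. \<bar>B (i, j)\<bar>)"
  define Dm where "Dm = sqrt (real (ns j) * R\<^sup>2 + R\<^sup>2)"
  define G0 where "G0 = \<bar>gs j (\<lambda>_. 0) 0\<bar>"
  define Cj where "Cj = (\<bar>pL j\<bar> + (G0 + \<bar>L\<bar> * Dm) + \<bar>dbar j\<bar> * \<bar>R\<bar> + S1 + S2) / M j"
  have fin1: "finite {k. (j, k) \<in> E}"
    using finite_imageI[OF finE, of snd] by (rule finite_subset[rotated]) force
  have fin2: "finite {i. (i, j) \<in> E}"
    using finite_imageI[OF finE, of fst] by (rule finite_subset[rotated]) force
  show ?thesis
  proof (intro exI[of _ Cj] allI impI)
    fix z :: hstate assume bz: "\<bar>om z j\<bar> \<le> R \<and> \<bar>sg z j\<bar> \<le> R \<and> (\<forall>k<ns j. \<bar>xs z j k\<bar> \<le> R)"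
    define v where "v = restr (ns j) (xs z j)"
    have sq: "(v k - 0)\<^sup>2 \<le> R\<^sup>2" if "k < ns j" for k
    proof -
      have "\<bar>v k\<bar> \<le> R" using bz that unfolding v_def restr_def by simp
      then have "\<bar>v k\<bar>\<^sup>2 \<le> R\<^sup>2" by (intro power_mono) auto
      then show ?thesis by simp
    qed
    have "(\<Sum>k<ns j. (v k - 0)\<^sup>2) \<le> (\<Sum>k<ns j. R\<^sup>2)" by (rule sum_mono) (use sq in auto)
    then have s1: "(\<Sum>k<ns j. (v k - 0)\<^sup>2) \<le> real (ns j) * R\<^sup>2" by simp
    have "\<bar>om z j\<bar>\<^sup>2 \<le> R\<^sup>2" using bz by (intro power_mono) auto
    then have s2: "(- om z j - 0)\<^sup>2 \<le> R\<^sup>2" by simp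
    have dd: "dist_nR (ns j) v (- om z j) (\<lambda>_. 0) 0 \<le> Dm"
      unfolding dist_nR_def Dm_def using s1 s2 by (intro real_sqrt_le_mono) linarith
    have d0: "0 \<le> dist_nR (ns j) v (- om z j) (\<lambda>_. 0) 0" unfolding dist_nR_def by (simp add: sum_nonneg)
    have "\<bar>gs j v (- om z j) - gs j (\<lambda>_. 0) 0\<bar> \<le> L * dist_nR (ns j) v (- om z j) (\<lambda>_. 0) 0" using L by blast
    also have "\<dots> \<le> \<bar>L\<bar> * dist_nR (ns j) v (- om z j) (\<lambda>_. 0) 0" using d0 by (intro mult_right_mono) auto
    also have "\<dots> \<le> \<bar>L\<bar> * Dm" using dd by (intro mult_left_mono) auto
    finally have gb: "\<bar>gs j v (- om z j)\<bar> \<le> G0 + \<bar>L\<bar> * Dm" unfolding G0_def by linarith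
    have db: "\<bar>dbar j * real_of_int (sg z j)\<bar> \<le> \<bar>dbar j\<bar> * \<bar>R\<bar>"
      unfolding abs_mult using bz by (intro mult_left_mono) auto
    have b1: "\<bar>\<Sum>k\<in>{k. (j, k) \<in> E}. B (j, k) * sin (eta z (j, k))\<bar> \<le> S1"
    proof -
      have "\<bar>\<Sum>k\<in>{k. (j, k) \<in> E}. B (j, k) * sin (eta z (j, k))\<bar> \<le> (\<Sum>k\<in>{k. (j, k) \<in> E}. \<bar>B (j, k) * sin (eta z (j, k))\<bar>)"
        by (rule sum_abs)
      also have "\<dots> \<le> S1" unfolding S1_def
        by (rule sum_mono) (simp add: abs_mult mult_left_le abs_sin_le_one)
      finally show ?thesis .
    qed
    have b2: "\<bar>\<Sum>i\<in>{i. (i, j) \<in> E}. B (i, j) * sin (eta z (i, j))\<bar> \<le> S2"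
    proof -
      have "\<bar>\<Sum>i\<in>{i. (i, j) \<in> E}. B (i, j) * sin (eta z (i, j))\<bar> \<le> (\<Sum>i\<in>{i. (i, j) \<in> E}. \<bar>B (i, j) * sin (eta z (i, j))\<bar>)"
        by (rule sum_abs)
      also have "\<dots> \<le> S2" unfolding S2_def
        by (rule sum_mono) (simp add: abs_mult mult_left_le abs_sin_le_one)
      finally show ?thesis .
    qed
    define X where "X = - pL j + gs j v (- om z j) - dbar j * real_of_int (sg z j)
      - (\<Sum>k\<in>{k. (j, k) \<in> E}. B (j, k) * sin (eta z (j, k)))
      + (\<Sum>i\<in>{i. (i, j) \<in> E}. B (i, j) * sin (eta z (i, j)))"
    have Xb: "\<bar>X\<bar> \<le> \<bar>pL j\<bar> + (G0 + \<bar>L\<bar> * Dm) + \<bar>dbar j\<bar> * \<bar>R\<bar> + S1 + S2"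
    proof (rule abs_leI)
      note f = abs_le_D1[OF gb] abs_le_D2[OF gb] abs_le_D1[OF db] abs_le_D2[OF db]
        abs_le_D1[OF b1] abs_le_D2[OF b1] abs_le_D1[OF b2] abs_le_D2[OF b2]
        abs_ge_self[of "pL j"] abs_ge_minus_self[of "pL j"]
      show "X \<le> \<bar>pL j\<bar> + (G0 + \<bar>L\<bar> * Dm) + \<bar>dbar j\<bar> * \<bar>R\<bar> + S1 + S2"
        unfolding X_def using f by linarith
      show "- X \<le> \<bar>pL j\<bar> + (G0 + \<bar>L\<bar> * Dm) + \<bar>dbar j\<bar> * \<bar>R\<bar> + S1 + S2"
        unfolding X_def using f by linarith
    qed
    have "omega_rhs E M pL B ns gs dbar j z = X / M j" unfolding omega_rhs_def X_def v_def by simp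
    then have "\<bar>omega_rhs E M pL B ns gs dbar j z\<bar> = \<bar>X\<bar> / M j" using Mj by simp
    also have "\<dots> \<le> Cj" unfolding Cj_def using Xb Mj by (intro divide_right_mono) auto
    finally show "\<bar>omega_rhs E M pL B ns gs dbar j z\<bar> \<le> Cj" .
  qed
qed



theorem proposition1:
  fixes nN :: nat and E :: "(nat \<times> nat) set"
    and M pL dbar w0 w1 :: "nat \<Rightarrow> real" and B :: "nat \<times> nat \<Rightarrow> real"
    and ns :: "nat \<Rightarrow> nat"
    and fs :: "nat \<Rightarrow> (nat \<Rightarrow> real) \<Rightarrow> real \<Rightarrow> (nat \<Rightarrow> real)"
    and gs :: "nat \<Rightarrow> (nat \<Rightarrow> real) \<Rightarrow> real \<Rightarrow> real"
    and K :: "(real \<times> nat) set" and z :: "real \<times> nat \<Rightarrow> hstate"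
  assumes E_sub: "E \<subseteq> {1..nN} \<times> {1..nN}"
    and E_orient: "\<forall>i j. (i, j) \<in> E \<longrightarrow> (j, i) \<notin> E"
    and connected: "\<forall>i\<in>{1..nN}. \<forall>j\<in>{1..nN}. (i, j) \<in> (E \<union> E\<inverse>)\<^sup>*"
    and M_pos: "\<forall>j\<in>{1..nN}. M j > 0"
    and B_pos: "\<forall>e\<in>E. B e > 0"
    and fs_lip: "\<forall>j\<in>{1..nN}. \<exists>L. \<forall>v a w b.
                   norm_n (ns j) (\<lambda>k. fs j v a k - fs j w b k) \<le> L * dist_nR (ns j) v a w b"
    and gs_lip: "\<forall>j\<in>{1..nN}. \<exists>L. \<forall>v a w b.
                   \<bar>gs j v a - gs j w b\<bar> \<le> L * dist_nR (ns j) v a w b"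
    and dbar_nonneg: "\<forall>j\<in>{1..nN}. dbar j \<ge> 0"
    and thresholds: "\<forall>j\<in>{1..nN}. w1 j > w0 j \<and> w0 j > 0"
    and sol: "is_solution nN E M pL B ns fs gs dbar w0 w1 K z"
    and compl: "complete_dom K"
    and bdd: "bounded_sol nN E ns K z"
  shows "\<exists>\<tau>>0. \<forall>j\<in>{1..nN}. \<forall>t\<in>switch_times K z j. \<forall>t'\<in>switch_times K z j.
           (\<exists>s\<in>switch_times K z j. s < t) \<and> t < t' \<longrightarrow> t' - t \<ge> \<tau>"
proof -
  define FC where "FC = flow_coords nN E M pL B ns fs gs dbar"
  have htd: "hybrid_time_domain K" using sol unfolding is_solution_def by blast
  have flowc: "(\<forall>(c, r) \<in> FC. loc_abs_cont_on {t. (t, l) \<in> K} (\<lambda>t. c (z (t, l)))) \<and>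
          (interior {t. (t, l) \<in> K} \<noteq> {} \<longrightarrow>
             (\<forall>t\<in>interior {t. (t, l) \<in> K}. inLam nN w0 w1 (z (t, l))) \<and>
             (\<forall>(c, r) \<in> FC.
                AE t in lebesgue. t \<in> {t. (t, l) \<in> K} \<longrightarrow>
                  ((\<lambda>s. c (z (s, l))) has_real_derivative r (z (t, l))) (at t within {t. (t, l) \<in> K})))" for l
    using sol unfolding is_solution_def FC_def by blast
  have jmp: "jump_ok nN E ns w0 w1 (z (t,l)) (z (t,Suc l))" if "(t,l)\<in>K" "(t,Suc l)\<in>K" for t l
    using sol that unfolding is_solution_def by blast
  obtain tt :: "nat \<Rightarrow> real" where tt1: "\<forall>l. tt l \<le> tt (Suc l)" and tt2: "\<forall>t m. (t,m)\<in>K \<longrightarrow> tt m \<le> t"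
    and tt3: "\<forall>t m t' m'. (t,m)\<in>K \<longrightarrow> (t',m')\<in>K \<longrightarrow> m < m' \<longrightarrow> t \<le> tt (Suc m)"
    and tt4: "\<forall>m t' m'. (t',m')\<in>K \<longrightarrow> m < m' \<longrightarrow> (tt (Suc m), m) \<in> K \<and> (tt (Suc m), Suc m) \<in> K"
    and cvx: "\<forall>m t1 t2 t. (t1,m)\<in>K \<longrightarrow> (t2,m)\<in>K \<longrightarrow> t1 \<le> t \<longrightarrow> t \<le> t2 \<longrightarrow> (t,m)\<in>K"
    using htd_props[OF htd] by blast
  have cvx': "(t,m)\<in>K" if "(t1,m)\<in>K" "(t2,m)\<in>K" "t1 \<le> t" "t \<le> t2" for m t1 t2 t
    using cvx that by blast
  have F2: "s \<le> s'" if "(s,m)\<in>K" "(s',m')\<in>K" "m<m'" for s m s' m'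
  proof -
    have "s \<le> tt (Suc m)" using tt3 that by blast
    also have "tt (Suc m) \<le> tt m'" using lift_Suc_mono_le[of tt "Suc m" m'] tt1 that(3) by auto
    also have "tt m' \<le> s'" using tt2 that(2) by blast
    finally show ?thesis .
  qed
  have F3: "\<exists>r. (r,m)\<in>K \<and> (r,Suc m)\<in>K" if "(s,m)\<in>K" "(s',m')\<in>K" "m<m'" for s m s' m'
    using tt4 that by blast
  have finE: "finite E" using E_sub by (rule finite_subset) simp
  obtain R :: int where R: "\<forall>p\<in>K. (\<forall>e\<in>E. \<bar>eta (z p) e\<bar> \<le> R) \<and>
     (\<forall>j\<in>{1..nN}. \<bar>om (z p) j\<bar> \<le> R \<and> \<bar>sg (z p) j\<bar> \<le> R \<and> (\<forall>k<ns j. \<bar>xs (z p) j k\<bar> \<le> R))"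
    using bdd unfolding bounded_sol_def by blast
  have "\<forall>j\<in>{1..nN}. \<exists>Cj. \<forall>p\<in>K. \<bar>omega_rhs E M pL B ns gs dbar j (z p)\<bar> \<le> Cj"
  proof
    fix j assume j: "j \<in> {1..nN}"
    have Mj: "M j > 0" using M_pos j by blast
    have lip: "\<exists>L. \<forall>v a w b. \<bar>gs j v a - gs j w b\<bar> \<le> L * dist_nR (ns j) v a w b" using gs_lip j by blast
    obtain Cj where Cj: "\<forall>zz::hstate. (\<bar>om zz j\<bar> \<le> real_of_int R \<and> real_of_int \<bar>sg zz j\<bar> \<le> real_of_int R \<and> (\<forall>k<ns j. \<bar>xs zz j k\<bar> \<le> real_of_int R)) \<longrightarrow>
             \<bar>omega_rhs E M pL B ns gs dbar j zz\<bar> \<le> Cj"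
      using rhs_bound[where E=E and M=M and j=j and gs=gs and ns=ns and R="real_of_int R" and pL=pL and B=B and dbar=dbar, OF finE Mj lip] by blast
    show "\<exists>Cj. \<forall>p\<in>K. \<bar>omega_rhs E M pL B ns gs dbar j (z p)\<bar> \<le> Cj"
    proof (intro exI[of _ Cj] ballI)
      fix p assume "p \<in> K"
      then have "\<bar>om (z p) j\<bar> \<le> real_of_int R \<and> \<bar>sg (z p) j\<bar> \<le> R \<and> (\<forall>k<ns j. \<bar>xs (z p) j k\<bar> \<le> real_of_int R)"
        using R j by blast
      then have "\<bar>om (z p) j\<bar> \<le> real_of_int R \<and> real_of_int \<bar>sg (z p) j\<bar> \<le> real_of_int R \<and> (\<forall>k<ns j. \<bar>xs (z p) j k\<bar> \<le> real_of_int R)"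
        by (simp del: of_int_abs)
      then show "\<bar>omega_rhs E M pL B ns gs dbar j (z p)\<bar> \<le> Cj" by (rule Cj[rule_format])
    qed
  qed
  then have "\<exists>Cf. \<forall>j\<in>{1..nN}. \<forall>p\<in>K. \<bar>omega_rhs E M pL B ns gs dbar j (z p)\<bar> \<le> Cf j"
    by (rule bchoice)
  then obtain Cf where Cf: "\<forall>j\<in>{1..nN}. \<forall>p\<in>K. \<bar>omega_rhs E M pL B ns gs dbar j (z p)\<bar> \<le> Cf j"
    by blast
  define C where "C = 1 + (\<Sum>j\<in>{1..nN}. \<bar>Cf j\<bar>)"
  have "(\<Sum>j\<in>{1..nN}. \<bar>Cf j\<bar>) \<ge> 0" by (rule sum_nonneg) simp
  then have Cpos: "C > 0" unfolding C_def by linarith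
  have Cb: "\<bar>omega_rhs E M pL B ns gs dbar j (z p)\<bar> \<le> C" if "j \<in> {1..nN}" "p \<in> K" for j p
  proof -
    have "Cf j \<le> \<bar>Cf j\<bar>" by simp
    also have "\<bar>Cf j\<bar> \<le> (\<Sum>j\<in>{1..nN}. \<bar>Cf j\<bar>)"
      by (rule member_le_sum) (use that in auto)
    finally have "Cf j \<le> (\<Sum>j\<in>{1..nN}. \<bar>Cf j\<bar>)" .
    moreover have "\<bar>omega_rhs E M pL B ns gs dbar j (z p)\<bar> \<le> Cf j" using Cf that by blast
    ultimately show ?thesis unfolding C_def by linarith
  qed
  have key: "w1 j - w0 j \<le> C * (t' - t)"
    if j: "j \<in> {1..nN}" and tl: "(t,l)\<in>K" "(t,Suc l)\<in>K" "sg (z (t,Suc l)) j \<noteq> sg (z (t,l)) j"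
      and tl': "(t',l')\<in>K" "(t',Suc l')\<in>K" "sg (z (t',Suc l')) j \<noteq> sg (z (t',l')) j"
      and tt': "t < t'"
    for j t l t' l'
  proof -
    define \<omega> where "\<omega> p = om (z p) j" for p
    define \<sigma> where "\<sigma> p = sg (z p) j" for p
    have flowlip: "\<bar>\<omega> (s',m) - \<omega> (s,m)\<bar> \<le> C*(s'-s)" if sm: "(s,m)\<in>K" "(s',m)\<in>K" "s \<le> s'" for s s' m
    proof (cases "s = s'")
      case True then show ?thesis by simp
    next
      case False
      then have lt: "s < s'" using sm by simp
      have sub: "{s..s'} \<subseteq> {t. (t,m)\<in>K}"
      proof
        fix x assume "x \<in> {s..s'}"
        then show "x \<in> {t. (t,m)\<in>K}" using cvx'[OF sm(1,2)] by simp
      qed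
      have "(s+s')/2 \<in> interior {t. (t,m)\<in>K}"
      proof -
        have "{s<..<s'} \<subseteq> {s..s'}" by auto
        then have "{s<..<s'} \<subseteq> {t. (t,m)\<in>K}" using sub by (rule order_trans)
        then have "interior {s<..<s'} \<subseteq> interior {t. (t,m)\<in>K}" by (rule interior_mono)
        moreover have "(s+s')/2 \<in> {s<..<s'}" using lt by auto
        ultimately show ?thesis by (auto simp: interior_open)
      qed
      then have intne: "interior {t. (t,m)\<in>K} \<noteq> {}" by blast
      have mem: "((\<lambda>z. om z j), omega_rhs E M pL B ns gs dbar j) \<in> FC"
        unfolding FC_def flow_coords_def
        by (rule UnI1, rule UnI1, rule UnI2, rule CollectI, rule exI[of _ j]) (use j in simp)
      have A1: "\<forall>(c, r) \<in> FC. loc_abs_cont_on {t. (t, m) \<in> K} (\<lambda>t. c (z (t, m)))" by (rule conjunct1[OF flowc[of m]])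
      have A2: "\<forall>(c, r) \<in> FC. AE t in lebesgue. t \<in> {t. (t, m) \<in> K} \<longrightarrow>
                  ((\<lambda>s. c (z (s, m))) has_real_derivative r (z (t, m))) (at t within {t. (t, m) \<in> K})"
        by (rule conjunct2[OF mp[OF conjunct2[OF flowc[of m]] intne]])
      from bspec[OF A1 mem] have lac: "loc_abs_cont_on {t. (t,m)\<in>K} (\<lambda>t. om (z (t,m)) j)" by simp
      from bspec[OF A2 mem] have ae: "AE x in lebesgue. x \<in> {t. (t, m) \<in> K} \<longrightarrow>
                  ((\<lambda>s. om (z (s, m)) j) has_real_derivative omega_rhs E M pL B ns gs dbar j (z (x, m))) (at x within {t. (t, m) \<in> K})"
        by simp
      have ac: "abs_cont_on {s..s'} (\<lambda>t. om (z (t,m)) j)" using lac sub unfolding loc_abs_cont_on_def by blast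
      from ae obtain N where N: "{x\<in>space lebesgue. \<not> (x \<in> {t. (t, m) \<in> K} \<longrightarrow>
                  ((\<lambda>s. om (z (s, m)) j) has_real_derivative omega_rhs E M pL B ns gs dbar j (z (x, m))) (at x within {t. (t, m) \<in> K}))} \<subseteq> N"
          "emeasure lebesgue N = 0" "N \<in> sets lebesgue"
        by (rule AE_E)
      have Nn: "N \<in> null_sets lebesgue" using N(2,3) by auto
      have der: "\<forall>x\<in>{s..s'} - N. \<exists>D. \<bar>D\<bar> \<le> C \<and> ((\<lambda>t. om (z (t,m)) j) has_real_derivative D) (at x within {s..s'})"
      proof
        fix x assume x: "x \<in> {s..s'} - N"
        then have xK: "x \<in> {t. (t,m)\<in>K}" using sub by auto
        have "((\<lambda>s. om (z (s, m)) j) has_real_derivative omega_rhs E M pL B ns gs dbar j (z (x, m))) (at x within {t. (t, m) \<in> K})"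
          using N(1) x xK by auto
        then have "((\<lambda>s. om (z (s, m)) j) has_real_derivative omega_rhs E M pL B ns gs dbar j (z (x, m))) (at x within {s..s'})"
          using sub by (rule DERIV_subset)
        moreover have "\<bar>omega_rhs E M pL B ns gs dbar j (z (x, m))\<bar> \<le> C" using Cb j xK by simp
        ultimately show "\<exists>D. \<bar>D\<bar> \<le> C \<and> ((\<lambda>t. om (z (t,m)) j) has_real_derivative D) (at x within {s..s'})"
          by blast
      qed
      have "\<bar>om (z (s',m)) j - om (z (s,m)) j\<bar> \<le> C*(s'-s)"
        using ac_lip[OF sm(3) ac Nn der] Cpos by simp
      then show ?thesis unfolding \<omega>_def .
    qed
    have jumpw: "\<omega> (r,Suc m) = \<omega> (r,m)" if "(r,m)\<in>K" "(r,Suc m)\<in>K" for r m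
      using jmp[OF that] j unfolding jump_ok_def \<omega>_def by blast
    have one: "\<sigma> (s,m) = \<sigma> (s',m)" if "(s,m)\<in>K" "(s',m)\<in>K" "s \<le> s'" for s s' m
    proof -
      have sub: "{s..s'} \<subseteq> {t. (t,m)\<in>K}"
      proof
        fix x assume "x \<in> {s..s'}"
        then show "x \<in> {t. (t,m)\<in>K}" using cvx'[OF that(1,2)] by simp
      qed
      have mem: "((\<lambda>z. real_of_int (sg z j)), (\<lambda>z. 0)) \<in> FC"
        unfolding FC_def flow_coords_def
        by (rule UnI2, rule CollectI, rule exI[of _ j]) (use j in simp)
      have A1: "\<forall>(c, r) \<in> FC. loc_abs_cont_on {t. (t, m) \<in> K} (\<lambda>t. c (z (t, m)))" by (rule conjunct1[OF flowc[of m]])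
      from bspec[OF A1 mem] have "loc_abs_cont_on {t. (t,m)\<in>K} (\<lambda>t. real_of_int (sg (z (t,m)) j))" by simp
      then have "abs_cont_on {s..s'} (\<lambda>t. real_of_int (sg (z (t,m)) j))" using sub unfolding loc_abs_cont_on_def by blast
      then have "continuous_on {s..s'} (\<lambda>t. real_of_int (sg (z (t,m)) j))" by (rule ac_cont)
      from int_cont_const[of s s' "\<lambda>t. sg (z (t,m)) j", OF that(3) this] show ?thesis unfolding \<sigma>_def .
    qed
    have sgconst: "\<sigma> (s,m) = \<sigma> (s',m)" if "(s,m)\<in>K" "(s',m)\<in>K" for s s' m
    proof (cases "s \<le> s'")
      case True then show ?thesis using one that by blast
    next
      case False then have "s' \<le> s" by simp
      then show ?thesis using one[of s' m s] that by simp
    qed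
    have sgnh0: "sgnh x \<noteq> 0" for x unfolding sgnh_def by simp
    have sw: "(\<bar>\<omega> (r,q)\<bar> = w1 j \<and> \<sigma> (r,q) = 0 \<and> \<sigma> (r,Suc q) \<noteq> 0) \<or> (\<bar>\<omega> (r,q)\<bar> = w0 j \<and> \<sigma> (r,q) \<noteq> 0 \<and> \<sigma> (r,Suc q) = 0)"
      if rq: "(r,q)\<in>K" "(r,Suc q)\<in>K" "\<sigma> (r,Suc q) \<noteq> \<sigma> (r,q)" for r q
    proof -
      have "sg (z (r,Suc q)) j = (if \<bar>om (z (r,q)) j\<bar> = w1 j \<and> sg (z (r,q)) j = 0 then sgnh (om (z (r,q)) j)
                   else if \<bar>om (z (r,q)) j\<bar> = w0 j \<and> sg (z (r,q)) j = sgnh (om (z (r,q)) j) then 0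
                   else sg (z (r,q)) j)" using jmp[OF rq(1,2)] j unfolding jump_ok_def by blast
      then show ?thesis using rq(3) sgnh0 unfolding \<sigma>_def \<omega>_def by (auto split: if_splits)
    qed
    have oml: "\<bar>\<omega> (s',m+k) - \<omega> (s,m)\<bar> \<le> C*(s'-s)" if "(s,m)\<in>K" "(s',m+k)\<in>K" "s \<le> s'" for s m s' k
      proof -
      have a1: "\<forall>s m s' m'. (s,m)\<in>K \<longrightarrow> (s',m')\<in>K \<longrightarrow> m<m' \<longrightarrow> s \<le> s'" using F2 by blast
      have a2: "\<forall>s m s' m'. (s,m)\<in>K \<longrightarrow> (s',m')\<in>K \<longrightarrow> m<m' \<longrightarrow> (\<exists>r. (r,m)\<in>K \<and> (r,Suc m)\<in>K)" using F3 by blast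
      have a3: "\<forall>r m. (r,m)\<in>K \<longrightarrow> (r,Suc m)\<in>K \<longrightarrow> \<omega> (r,Suc m) = \<omega> (r,m)" using jumpw by blast
      have a4: "\<forall>s s' m. (s,m)\<in>K \<longrightarrow> (s',m)\<in>K \<longrightarrow> s \<le> s' \<longrightarrow> \<bar>\<omega> (s',m) - \<omega> (s,m)\<bar> \<le> C*(s'-s)" using flowlip by blast
      show ?thesis by (rule dom_lip[OF a1 a2 a3 a4 that])
    qed
    have chain: "\<exists>r q. m \<le> q \<and> q < m+k \<and> (r,q)\<in>K \<and> (r,Suc q)\<in>K \<and> P (\<sigma> (r,q)) \<and> \<not> P (\<sigma> (r,Suc q))"
      if "(s,m)\<in>K" "(s',m+k)\<in>K" "P (\<sigma> (s,m))" "\<not> P (\<sigma> (s',m+k))" for s m s' k P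
      proof -
      have a2: "\<forall>s m s' m'. (s,m)\<in>K \<longrightarrow> (s',m')\<in>K \<longrightarrow> m<m' \<longrightarrow> (\<exists>r. (r,m)\<in>K \<and> (r,Suc m)\<in>K)" using F3 by blast
      have a3: "\<forall>s s' m. (s,m)\<in>K \<longrightarrow> (s',m)\<in>K \<longrightarrow> \<sigma> (s,m) = \<sigma> (s',m)" using sgconst by blast
      show ?thesis by (rule dom_chain[OF a2 a3 that])
    qed
    have ll: "Suc l \<le> l'"
    proof (rule ccontr)
      assume "\<not> Suc l \<le> l'" then have "l' < Suc l" by simp
      from F2[OF tl'(1) tl(2) this] have "t' \<le> t" .
      then show False using tt' by simp
    qed
    then obtain k where k: "l' = Suc l + k" using le_Suc_ex by blast
    have sw1: "(\<bar>\<omega> (t,l)\<bar> = w1 j \<and> \<sigma> (t,l) = 0 \<and> \<sigma> (t,Suc l) \<noteq> 0) \<or> (\<bar>\<omega> (t,l)\<bar> = w0 j \<and> \<sigma> (t,l) \<noteq> 0 \<and> \<sigma> (t,Suc l) = 0)"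
      using sw[OF tl(1,2)] tl(3) unfolding \<sigma>_def by blast
    have sw2: "(\<bar>\<omega> (t',l')\<bar> = w1 j \<and> \<sigma> (t',l') = 0 \<and> \<sigma> (t',Suc l') \<noteq> 0) \<or> (\<bar>\<omega> (t',l')\<bar> = w0 j \<and> \<sigma> (t',l') \<noteq> 0 \<and> \<sigma> (t',Suc l') = 0)"
      using sw[OF tl'(1,2)] tl'(3) unfolding \<sigma>_def by blast
    have wt: "\<omega> (t,Suc l) = \<omega> (t,l)" using jumpw tl(1,2) by blast
    have base: "\<bar>\<omega> (t',l') - \<omega> (t,Suc l)\<bar> \<le> C*(t'-t)"
      using oml[of t "Suc l" t' k] tl(2) tl'(1) tt' k by simp
    have mid: "\<bar>\<omega> (r,q) - \<omega> (t,Suc l)\<bar> \<le> C*(t'-t)"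
      if rq: "Suc l \<le> q" "q < l'" "(r,q)\<in>K" "(r,Suc q)\<in>K" for r q
    proof -
      have tr: "t \<le> r" using F2[OF tl(2) rq(4)] rq(1) by simp
      have rt: "r \<le> t'" using F2[OF rq(3) tl'(1) rq(2)] .
      obtain k2 where k2: "q = Suc l + k2" using rq(1) le_Suc_ex by blast
      have "\<bar>\<omega> (r,q) - \<omega> (t,Suc l)\<bar> \<le> C*(r-t)" using oml[of t "Suc l" r k2] tl(2) rq(3) tr k2 by simp
      also have "\<dots> \<le> C*(t'-t)" using Cpos rt by (intro mult_left_mono) auto
      finally show ?thesis .
    qed
    have w01: "w0 j < w1 j" using thresholds j by auto
    show ?thesis
    proof (cases "\<bar>\<omega> (t,l)\<bar> = w1 j \<and> \<sigma> (t,l) = 0 \<and> \<sigma> (t,Suc l) \<noteq> 0")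
      case up: True
      show ?thesis
      proof (cases "\<bar>\<omega> (t',l')\<bar> = w0 j")
        case True
        then show ?thesis using base wt up by linarith
      next
        case False
        then have s0: "\<sigma> (t',l') = 0" using sw2 by blast
        obtain r q where rq: "Suc l \<le> q" "q < Suc l + k" "(r,q)\<in>K" "(r,Suc q)\<in>K" "\<sigma> (r,q) \<noteq> 0" "\<sigma> (r,Suc q) = 0"
          using chain[of t "Suc l" t' k "\<lambda>x. x \<noteq> 0"] tl(2) tl'(1) k up s0 by auto
        have "\<bar>\<omega> (r,q)\<bar> = w0 j" using sw[OF rq(3,4)] rq(5,6) by auto
        then show ?thesis using mid[OF rq(1) _ rq(3,4)] rq(2) k wt up by fastforce
      qed
    next
      case False
      then have dn: "\<bar>\<omega> (t,l)\<bar> = w0 j" "\<sigma> (t,Suc l) = 0" using sw1 by blast+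
      show ?thesis
      proof (cases "\<bar>\<omega> (t',l')\<bar> = w1 j")
        case True
        then show ?thesis using base wt dn by linarith
      next
        case False
        then have s0: "\<sigma> (t',l') \<noteq> 0" using sw2 by blast
        obtain r q where rq: "Suc l \<le> q" "q < Suc l + k" "(r,q)\<in>K" "(r,Suc q)\<in>K" "\<sigma> (r,q) = 0" "\<sigma> (r,Suc q) \<noteq> 0"
          using chain[of t "Suc l" t' k "\<lambda>x. x = 0"] tl(2) tl'(1) k dn s0 by auto
        have "\<bar>\<omega> (r,q)\<bar> = w1 j" using sw[OF rq(3,4)] rq(5,6) by auto
        then show ?thesis using mid[OF rq(1) _ rq(3,4)] rq(2) k wt dn by fastforce
      qed
    qed
  qed
  define S where "S = 1 + (\<Sum>j\<in>{1..nN}. C / (w1 j - w0 j))"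
  have Sge: "C / (w1 j - w0 j) \<le> S" if "j \<in> {1..nN}" for j
  proof -
    have "C / (w1 j - w0 j) \<le> (\<Sum>j\<in>{1..nN}. C / (w1 j - w0 j))"
      by (rule member_le_sum) (use that thresholds Cpos in \<open>auto intro!: divide_nonneg_pos\<close>)
    then show ?thesis unfolding S_def by simp
  qed
  have Spos: "S > 0" unfolding S_def
    using thresholds Cpos by (smt (verit) sum_nonneg divide_nonneg_pos atLeastAtMost_iff)
  show ?thesis
  proof (intro exI[of _ "1/S"] conjI ballI impI)
    show "1/S > 0" using Spos by simp
    fix j t t' assume j: "j \<in> {1..nN}" and t: "t \<in> switch_times K z j" and t': "t' \<in> switch_times K z j"
      and h: "(\<exists>s\<in>switch_times K z j. s < t) \<and> t < t'"
    obtain l where tl: "(t,l)\<in>K" "(t,Suc l)\<in>K" "sg (z (t,Suc l)) j \<noteq> sg (z (t,l)) j"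
      using t unfolding switch_times_def by blast
    obtain l' where tl': "(t',l')\<in>K" "(t',Suc l')\<in>K" "sg (z (t',Suc l')) j \<noteq> sg (z (t',l')) j"
      using t' unfolding switch_times_def by blast
    have kk: "w1 j - w0 j \<le> C * (t' - t)" using key[OF j tl tl'] h by blast
    have d: "w1 j - w0 j > 0" using thresholds j by auto
    have "1/S \<le> 1/(C / (w1 j - w0 j))"
      using Sge[OF j] d Cpos Spos by (intro divide_left_mono) (auto intro!: mult_pos_pos divide_pos_pos)
    also have "\<dots> = (w1 j - w0 j)/C" by simp
    also have "\<dots> \<le> t' - t" using kk Cpos by (simp add: divide_le_eq mult.commute)
    finally show "t' - t \<ge> 1/S" .
  qed
qed


end
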